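(* For every positive integer $k$, $$\sum_{r=1}^{2k} r!\,{2k\brace r}=\sum_{p=1}^{k}\sum_{q=1}^{k}{k\brace p}{k\brace q}\,p!\,q!\,D(p,q).$$
   Context: ${k\brace r}$ denotes the Stirling number of the second kind (number of partitions of a $k$-element set into $r$ nonempty blocks). $D(m,n)$ is the Delannoy number, defined for nonnegative integers $m,n$ by $D(m,n)=1$ if $mn=0$, and $D(m,n)=D(m-1,n)+D(m-1,n-1)+D(m,n-1)$ if $mn\neq0$. *)

theory Defs
  imports "HOL-Combinatorics.Stirling"
begin

fun Delannoy :: "nat \<Rightarrow> nat \<Rightarrow> nat" where
  "Delannoy 0 n = 1"
| "Delannoy (Suc m) 0 = 1"
| "Delannoy (Suc m) (Suc n) =
     Delannoy m (Suc n) + Delannoy m n + Delannoy (Suc m) n"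

end

theory Submission
  imports Defs
begin

lemma D_0 [simp]: "Delannoy p 0 = 1"
  by (cases p) simp_all

lemma D_1: "Delannoy (Suc 0) q = 2*q+1"
  by (induction q) simp_all

lemma D_1'': "Delannoy p (Suc 0) = 2*p+1"
  by (induction p) simp_all

lemma D_1': "Delannoy p 1 = 2*p+1"
  using D_1'' by simp

definition E :: "nat \<Rightarrow> nat \<Rightarrow> int" where
  "E p q = int (p+1) * int (Delannoy (p+1) q) + int p * int (Delannoy p q)
           - int (q+1) * int (Delannoy p (q+1)) - int q * int (Delannoy p q)"

lemma E_zero: "E p q = 0"
proof (induction p arbitrary: q)
  case 0
  show ?case by (simp add: E_def D_1)
next
  case (Suc p)
  note IHp = Suc.IH
  show ?case
  proof (induction q)
    case 0
    show ?case using D_1'[of "Suc p"] by (simp add: E_def)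
  next
    case (Suc q)
    have a: "E p q = 0" "E p (Suc q) = 0" using IHp by auto
    have r1: "Delannoy (Suc (Suc p)) (Suc q) = Delannoy (Suc p) (Suc q) + Delannoy (Suc p) q + Delannoy (Suc (Suc p)) q" by simp
    have r2: "Delannoy (Suc p) (Suc (Suc q)) = Delannoy p (Suc (Suc q)) + Delannoy p (Suc q) + Delannoy (Suc p) (Suc q)" by simp
    have r3: "Delannoy (Suc p) (Suc q) = Delannoy p (Suc q) + Delannoy p q + Delannoy (Suc p) q" by simp
    show ?case using a Suc.IH r1 r2 r3 unfolding E_def
      by (simp add: algebra_simps)
  qed
qed

lemma D_id: "p * Delannoy p q + (p+1) * Delannoy (p+1) q = q * Delannoy p q + (q+1) * Delannoy p (q+1)"
proof -
  have "int (p * Delannoy p q + (p+1) * Delannoy (p+1) q) = int (q * Delannoy p q + (q+1) * Delannoy p (q+1))"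
    using E_zero[of p q] unfolding E_def by (simp add: algebra_simps)
  thus ?thesis by (simp only: of_nat_eq_iff)
qed

definition W :: "nat \<Rightarrow> nat \<Rightarrow> nat" where
  "W p q = fact p * fact q * Delannoy p q"

lemma W_id: "p * W p q + W (Suc p) q = q * W p q + W p (Suc q)"
proof -
  have "p * W p q + W (Suc p) q = fact p * fact q * (p * Delannoy p q + (p+1) * Delannoy (p+1) q)"
    by (simp add: W_def algebra_simps)
  also have "\<dots> = fact p * fact q * (q * Delannoy p q + (q+1) * Delannoy p (q+1))"
    by (simp only: D_id)
  also have "\<dots> = q * W p q + W p (Suc q)"
    by (simp add: W_def algebra_simps)
  finally show ?thesis .
qed

lemma stir_shift:
  "(\<Sum>p\<le>Suc a. Stirling (Suc a) p * X p) = (\<Sum>p\<le>a. Stirling a p * (p * X p + X (Suc p)))"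
proof -
  have "(\<Sum>p\<le>Suc a. Stirling (Suc a) p * X p) = (\<Sum>p\<le>a. Stirling (Suc a) (Suc p) * X (Suc p))"
    by (subst sum.atMost_Suc_shift) simp
  also have "\<dots> = (\<Sum>p\<le>a. Suc p * Stirling a (Suc p) * X (Suc p)) + (\<Sum>p\<le>a. Stirling a p * X (Suc p))"
    by (simp add: sum.distrib algebra_simps)
  also have "(\<Sum>p\<le>a. Suc p * Stirling a (Suc p) * X (Suc p)) = (\<Sum>p\<le>Suc a. p * Stirling a p * X p)"
    by (simp only: sum.atMost_Suc_shift)
  also have "\<dots> = (\<Sum>p\<le>a. p * Stirling a p * X p)"
    by simp
  finally show ?thesis by (simp add: sum.distrib algebra_simps)
qed

definition T :: "nat \<Rightarrow> nat \<Rightarrow> nat" where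
  "T a b = (\<Sum>p\<le>a. \<Sum>q\<le>b. Stirling a p * Stirling b q * W p q)"

lemma T_step: "T (Suc a) b = T a (Suc b)"
proof -
  have "T (Suc a) b = (\<Sum>p\<le>Suc a. Stirling (Suc a) p * (\<Sum>q\<le>b. Stirling b q * W p q))"
    unfolding T_def by (simp add: sum_distrib_left mult.assoc)
  also have "\<dots> = (\<Sum>p\<le>a. Stirling a p * (p * (\<Sum>q\<le>b. Stirling b q * W p q) + (\<Sum>q\<le>b. Stirling b q * W (Suc p) q)))"
    by (rule stir_shift)
  also have "\<dots> = (\<Sum>p\<le>a. \<Sum>q\<le>b. Stirling a p * Stirling b q * (p * W p q + W (Suc p) q))"
    by (simp add: sum_distrib_left sum.distrib algebra_simps)
  also have "\<dots> = (\<Sum>p\<le>a. \<Sum>q\<le>b. Stirling a p * Stirling b q * (q * W p q + W p (Suc q)))"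
    by (simp only: W_id)
  also have "\<dots> = (\<Sum>q\<le>b. \<Sum>p\<le>a. Stirling a p * Stirling b q * (q * W p q + W p (Suc q)))"
    by (rule sum.swap)
  also have "\<dots> = (\<Sum>q\<le>b. Stirling b q * (q * (\<Sum>p\<le>a. Stirling a p * W p q) + (\<Sum>p\<le>a. Stirling a p * W p (Suc q))))"
    by (simp add: sum_distrib_left sum.distrib algebra_simps)
  also have "\<dots> = (\<Sum>q\<le>Suc b. Stirling (Suc b) q * (\<Sum>p\<le>a. Stirling a p * W p q))"
    by (rule stir_shift[symmetric])
  also have "\<dots> = T a (Suc b)"
    unfolding T_def by (subst sum.swap) (simp add: sum_distrib_left algebra_simps)
  finally show ?thesis .
qed

lemma T_shift: "T (a + b) 0 = T a b"
proof (induction b arbitrary: a)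
  case (Suc b)
  have "T (a + Suc b) 0 = T (Suc a + b) 0" by simp
  also have "\<dots> = T (Suc a) b" by (rule Suc.IH)
  also have "\<dots> = T a (Suc b)" by (rule T_step)
  finally show ?case .
qed simp

lemma T_0: "T n 0 = (\<Sum>r\<le>n. fact r * Stirling n r)"
  by (simp add: T_def W_def mult.commute)

theorem corollary1:
  fixes k :: nat
  assumes "k \<ge> 1"
  shows "(\<Sum>r=1..2*k. fact r * Stirling (2*k) r) =
         (\<Sum>p=1..k. \<Sum>q=1..k. Stirling k p * Stirling k q * fact p * fact q * Delannoy p q)"
proof -
  obtain m where m: "k = Suc m" using assms by (cases k) auto
  have z: "Stirling k 0 = 0" using m by simp
  have z2: "Stirling (2*k) 0 = 0" using m by simp
  have "(\<Sum>r=1..2*k. fact r * Stirling (2*k) r) = (\<Sum>r\<le>2*k. fact r * Stirling (2*k) r)"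
    using z2 by (simp add: sum.atLeast1_atMost_eq atMost_atLeast0 sum.atLeast_Suc_atMost[of 0 "2*k"])
  also have "\<dots> = T k k" using T_0[of "2*k"] T_shift[of k k] by (simp add: mult_2)
  also have "\<dots> = (\<Sum>p=1..k. \<Sum>q=1..k. Stirling k p * Stirling k q * W p q)"
    unfolding T_def atMost_atLeast0
    by (simp add: sum.atLeast_Suc_atMost z)
  finally show ?thesis by (simp add: W_def mult.assoc)
qed

end
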